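(* (1) If $\{T_1,\dots,T_n\}$ is an independent family of random $d\times d$ positive-semidefinite matrices and $W := \sum_{i=1}^n T_i$, then $$\mathbb{E}\|W\| \ge \frac14\Big[\|\mathbb{E}W\|^{1/2} + \big(\mathbb{E}\max_i\|T_i\|\big)^{1/2}\Big]^2.$$ (2) If $\{Y_1,\dots,Y_n\}$ is an independent family of random $d\times d$ Hermitian matrices with $\mathbb{E}Y_i=0$ for each $i$ and $X := \sum_{i=1}^n Y_i$, then $$\big(\mathbb{E}\|X\|^2\big)^{1/2} \ge \frac12\|\mathbb{E}X^2\|^{1/2} + \frac14\big(\mathbb{E}\max_i\|Y_i\|^2\big)^{1/2}.$$ (3) If $\{S_1,\dots,S_n\}$ is an independent family of random $d_1\times d_2$ complex matrices with $\mathbb{E}S_i=0$ for each $i$ and $Z := \sum_{i=1}^n S_i$, then $$\big(\mathbb{E}\|Z\|^2\big)^{1/2} \ge \frac12\max\Big\{\|\mathbb{E}[ZZ^*]\|^{1/2},\ \|\mathbb{E}[Z^*Z]\|^{1/2}\Big\} + \frac14\big(\mathbb{E}\max_i\|S_i\|^2\big)^{1/2}.$$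
   Context: $\|\cdot\|$ is the spectral norm, ${}^*$ the conjugate transpose. Expectations of random matrices are entrywise and assumed to exist where they appear as hypotheses; other quantities may be $+\infty$, with inequalities understood in $[0,\infty]$. *)

theory Defs
  imports "HOL-Probability.Probability"
begin

definition spec_norm :: "complex^'n^'m \<Rightarrow> real" where
  "spec_norm A = onorm (\<lambda>x. A *v x)"

definition ctrans :: "complex^'n^'m \<Rightarrow> complex^'m^'n" where
  "ctrans A = (\<chi> i j. cnj (A $ j $ i))"

definition hermitian :: "complex^'n^'n \<Rightarrow> bool" where
  "hermitian A \<longleftrightarrow> ctrans A = A"

definition psd :: "complex^'n^'n \<Rightarrow> bool" where
  "psd A \<longleftrightarrow> hermitian A \<and> (\<forall>x. 0 \<le> Re (\<Sum>i\<in>UNIV. cnj (x $ i) * (A *v x) $ i))"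

definition esqrt :: "ennreal \<Rightarrow> ennreal" where
  "esqrt x = (if x = \<top> then \<top> else ennreal (sqrt (enn2real x)))"

end

theory Submission
  imports Defs
begin


lemma spec_norm_bl: "bounded_linear (\<lambda>x. (A::complex^'n^'m) *v x)"
  by simp

lemma spec_norm_ge0: "0 \<le> spec_norm A"
  unfolding spec_norm_def by (rule onorm_pos_le) simp

lemma spec_norm_mv: "norm (A *v x) \<le> spec_norm A * norm x"
  unfolding spec_norm_def by (rule onorm) simp

lemma spec_norm_le: "0 \<le> b \<Longrightarrow> (\<And>x. norm (A *v x) \<le> b * norm x) \<Longrightarrow> spec_norm A \<le> b"
  unfolding spec_norm_def by (rule onorm_bound)

lemma spec_norm_add: "spec_norm (A + B) \<le> spec_norm A + spec_norm B"
proof (rule spec_norm_le)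
  show "0 \<le> spec_norm A + spec_norm B" using spec_norm_ge0[of A] spec_norm_ge0[of B] by simp
  fix x
  have "norm ((A+B) *v x) = norm (A *v x + B *v x)" by (simp add: matrix_vector_mult_add_rdistrib)
  also have "\<dots> \<le> norm (A *v x) + norm (B *v x)" by (rule norm_triangle_ineq)
  also have "\<dots> \<le> spec_norm A * norm x + spec_norm B * norm x"
    by (intro add_mono spec_norm_mv)
  finally show "norm ((A+B) *v x) \<le> (spec_norm A + spec_norm B) * norm x" by (simp add: algebra_simps)
qed

lemma mv_uminus: "(- A) *v x = - ((A::complex^'n^'m) *v x)"
  by (simp add: vec_eq_iff matrix_vector_mult_def sum_negf)
lemma mv_scaleR: "(c *\<^sub>R A) *v x = c *\<^sub>R ((A::complex^'n^'m) *v x)"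
  by (simp add: vec_eq_iff matrix_vector_mult_def scaleR_sum_right)
lemma mv_zero: "(0::complex^'n^'m) *v x = 0"
  by (simp add: vec_eq_iff matrix_vector_mult_def)

lemma spec_norm_uminus: "spec_norm (- A) = spec_norm A"
proof -
  have "(\<lambda>x. (-A) *v x) = (\<lambda>x. - (A *v x))" by (simp add: mv_uminus)
  then show ?thesis unfolding spec_norm_def by (simp add: onorm_neg)
qed

lemma spec_norm_diff: "spec_norm (A - B) \<le> spec_norm A + spec_norm B"
  using spec_norm_add[of A "-B"] by (simp add: spec_norm_uminus)

lemma spec_norm_scaleR: "spec_norm (c *\<^sub>R A) = \<bar>c\<bar> * spec_norm A"
proof -
  have "(\<lambda>x. (c *\<^sub>R A) *v x) = (\<lambda>x. c *\<^sub>R (A *v x))" by (simp add: mv_scaleR)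
  then show ?thesis unfolding spec_norm_def by (simp add: onorm_scaleR)
qed

lemma spec_norm_mult: "spec_norm (A ** B) \<le> spec_norm A * spec_norm B"
proof -
  have "spec_norm (A ** B) = onorm ((\<lambda>x. A *v x) \<circ> (\<lambda>x. B *v x))"
    unfolding spec_norm_def by (simp add: o_def matrix_vector_mul_assoc)
  also have "\<dots> \<le> spec_norm A * spec_norm B" unfolding spec_norm_def
    by (rule onorm_compose) simp_all
  finally show ?thesis .
qed

lemma spec_norm_zero[simp]: "spec_norm 0 = 0"
  using spec_norm_scaleR[of 0 A] by simp

lemma norm_mv_frob: "norm ((A::complex^'n^'m) *v x) \<le> real (CARD('m) * CARD('n)) * norm A * norm x"
proof -
  have "norm (A *v x) \<le> (\<Sum>i\<in>UNIV. norm ((A *v x)$i))"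
    unfolding norm_vec_def by (rule L2_set_le_sum) simp
  also have "\<dots> \<le> (\<Sum>i\<in>(UNIV::'m set). real CARD('n) * (norm A * norm x))"
  proof (rule sum_mono)
    fix i
    have "norm ((A *v x)$i) = norm (\<Sum>j\<in>UNIV. A$i$j * x$j)"
      by (simp add: matrix_vector_mult_def)
    also have "\<dots> \<le> (\<Sum>j\<in>UNIV. norm (A$i$j * x$j))" by (rule norm_sum)
    also have "\<dots> \<le> (\<Sum>j\<in>(UNIV::'n set). norm A * norm x)"
    proof (rule sum_mono)
      fix j
      have "norm (A$i$j) \<le> norm (A$i)" unfolding norm_vec_def[of "A$i"] by (rule member_le_L2_set) simp_all
      also have "\<dots> \<le> norm A" unfolding norm_vec_def[of A] by (rule member_le_L2_set) simp_all
      finally have "norm (A$i$j) \<le> norm A" .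
      moreover have "norm (x$j) \<le> norm x" unfolding norm_vec_def[of x] by (rule member_le_L2_set) simp_all
      ultimately show "norm (A$i$j * x$j) \<le> norm A * norm x"
        by (simp add: norm_mult mult_mono)
    qed
    finally show "norm ((A *v x)$i) \<le> real CARD('n) * (norm A * norm x)" by simp
  qed
  also have "\<dots> = real (CARD('m) * CARD('n)) * norm A * norm x" by simp
  finally show ?thesis .
qed

lemma spec_norm_frob: "spec_norm (A::complex^'n^'m) \<le> real (CARD('m) * CARD('n)) * norm A"
proof (rule spec_norm_le)
  fix x show "norm (A *v x) \<le> real (CARD('m) * CARD('n)) * norm A * norm x" by (rule norm_mv_frob)
qed simp

lemma spec_norm_lipschitz: "\<bar>spec_norm A - spec_norm B\<bar> \<le> spec_norm (A - B)"
proof -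
  have "spec_norm A \<le> spec_norm B + spec_norm (A - B)" using spec_norm_add[of B "A - B"] by simp
  moreover have "spec_norm B \<le> spec_norm A + spec_norm (A - B)"
    using spec_norm_add[of A "-(A - B)"] spec_norm_uminus[of "A - B"] by simp
  ultimately show ?thesis by linarith
qed

lemma spec_norm_continuous: "continuous_on UNIV (spec_norm :: complex^'n^'m \<Rightarrow> real)"
proof (rule lipschitz_on_continuous_on)
  show "(real (CARD('m) * CARD('n)))-lipschitz_on UNIV (spec_norm :: complex^'n^'m \<Rightarrow> real)"
  proof (rule lipschitz_onI)
    fix A B :: "complex^'n^'m"
    have "dist (spec_norm A) (spec_norm B) \<le> spec_norm (A - B)"
      using spec_norm_lipschitz[of A B] by (simp add: dist_real_def)
    also have "\<dots> \<le> real (CARD('m) * CARD('n)) * dist A B"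
      using spec_norm_frob[of "A - B"] by (simp add: dist_norm)
    finally show "dist (spec_norm A) (spec_norm B) \<le> real (CARD('m) * CARD('n)) * dist A B" .
  qed simp
qed

lemma spec_norm_measurable[measurable]: "(spec_norm :: complex^'n^'m \<Rightarrow> real) \<in> borel_measurable borel"
  by (rule borel_measurable_continuous_onI[OF spec_norm_continuous])




definition cinner :: "complex^'n \<Rightarrow> complex^'n \<Rightarrow> complex" where
  "cinner x y = (\<Sum>i\<in>UNIV. cnj (x$i) * y$i)"

lemma cinner_self: "cinner x x = complex_of_real ((norm x)\<^sup>2)"
proof -
  have "(norm x)\<^sup>2 = (\<Sum>i\<in>UNIV. (norm (x$i))\<^sup>2)"
    unfolding norm_vec_def L2_set_def by (simp add: sum_nonneg)
  have "cinner x x = (\<Sum>i\<in>UNIV. complex_of_real ((norm (x$i))\<^sup>2))"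
    unfolding cinner_def by (intro sum.cong refl) (metis complex_norm_square mult.commute)
  also have "\<dots> = complex_of_real (\<Sum>i\<in>UNIV. (norm (x$i))\<^sup>2)" by (simp only: of_real_sum)
  finally show ?thesis using \<open>(norm x)\<^sup>2 = _\<close> by simp
qed

lemma cinner_norm: "norm (cinner x y) \<le> norm x * norm y"
proof -
  have "norm (cinner x y) \<le> (\<Sum>i\<in>UNIV. norm (cnj (x$i) * y$i))"
    unfolding cinner_def by (rule norm_sum)
  also have "\<dots> = (\<Sum>i\<in>UNIV. \<bar>norm (x$i)\<bar> * \<bar>norm (y$i)\<bar>)" by (simp add: norm_mult)
  also have "\<dots> \<le> L2_set (\<lambda>i. norm (x$i)) UNIV * L2_set (\<lambda>i. norm (y$i)) UNIV"
    by (rule L2_set_mult_ineq)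
  finally show ?thesis by (simp add: norm_vec_def)
qed

lemma cinner_commute: "cinner x y = cnj (cinner y x)"
  unfolding cinner_def by (simp add: mult.commute)

lemma cinner_adjoint: "cinner x ((A::complex^'n^'m) *v y) = cinner (ctrans A *v x) y"
proof -
  have "cinner x (A *v y) = (\<Sum>i\<in>UNIV. \<Sum>j\<in>UNIV. cnj (x$i) * A$i$j * y$j)"
    unfolding cinner_def matrix_vector_mult_def by (simp add: sum_distrib_left mult.assoc)
  also have "\<dots> = (\<Sum>j\<in>UNIV. \<Sum>i\<in>UNIV. cnj (x$i) * A$i$j * y$j)" by (rule sum.swap)
  also have "\<dots> = cinner (ctrans A *v x) y"
    unfolding cinner_def matrix_vector_mult_def ctrans_def
    by (simp add: sum_distrib_left sum_distrib_right mult_ac)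
  finally show ?thesis .
qed

lemma ctrans_ctrans[simp]: "ctrans (ctrans A) = A"
  unfolding ctrans_def by (simp add: vec_eq_iff)

lemma cinner_add_left: "cinner (x + y) z = cinner x z + cinner y z"
  unfolding cinner_def by (simp add: distrib_right sum.distrib)
lemma cinner_add_right: "cinner z (x + y) = cinner z x + cinner z y"
  unfolding cinner_def by (simp add: distrib_left sum.distrib)
lemma cinner_diff_left: "cinner (x - y) z = cinner x z - cinner y z"
  unfolding cinner_def by (simp add: left_diff_distrib sum_subtractf)
lemma cinner_diff_right: "cinner z (x - y) = cinner z x - cinner z y"
  unfolding cinner_def by (simp add: right_diff_distrib sum_subtractf)
lemma cinner_scaleR_left: "cinner (c *\<^sub>R x) z = complex_of_real c * cinner x z"
  unfolding cinner_def vector_scaleR_component by (simp add: sum_distrib_left scaleR_conv_of_real mult.assoc)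

lemma spec_norm_ctrans: "spec_norm (ctrans A) \<le> spec_norm (A::complex^'n^'m)"
proof (rule spec_norm_le)
  show "0 \<le> spec_norm A" by (rule spec_norm_ge0)
  fix y
  let ?u = "ctrans A *v y"
  have "(norm ?u)\<^sup>2 = norm (cinner ?u ?u)" by (simp add: cinner_self norm_power)
  also have "cinner ?u ?u = cinner (A *v ?u) y"
    using cinner_adjoint[of ?u "ctrans A" y] by simp
  also have "norm \<dots> \<le> norm (A *v ?u) * norm y" by (rule cinner_norm)
  also have "\<dots> \<le> spec_norm A * norm ?u * norm y"
    by (intro mult_right_mono spec_norm_mv) simp
  finally have *: "(norm ?u)\<^sup>2 \<le> spec_norm A * norm ?u * norm y" .
  show "norm ?u \<le> spec_norm A * norm y"
  proof (cases "norm ?u = 0")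
    case True then show ?thesis using spec_norm_ge0[of A] by simp
  next
    case False
    then have "0 < norm ?u" by simp
    with * show ?thesis by (simp add: power2_eq_square mult.commute mult.left_commute)
  qed
qed

lemma mv_sum: "(\<Sum>i\<in>I. (T i::complex^'n^'m)) *v z = (\<Sum>i\<in>I. T i *v z)"
  by (induction I rule: infinite_finite_induct) (simp_all add: matrix_vector_mult_add_rdistrib mv_zero)

lemma cinner_zero_right[simp]: "cinner z 0 = 0" by (simp add: cinner_def)

lemma cinner_sum_right: "cinner z (\<Sum>i\<in>I. f i) = (\<Sum>i\<in>I. cinner z (f i))"
  by (induction I rule: infinite_finite_induct) (simp_all add: cinner_add_right cinner_zero_right)

lemma hermitian_swap: "hermitian T \<Longrightarrow> cinner y (T *v x) = cnj (cinner x (T *v y))"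
  unfolding hermitian_def using cinner_adjoint[of y T x] cinner_commute[of "T *v y" x] by simp

lemma psd_polar:
  assumes "psd T"
  shows "4 * Re (cinner x (T *v y)) \<le> Re (cinner (x + y) (T *v (x + y)))"
proof -
  have h: "hermitian T" using assms unfolding psd_def by simp
  have p: "0 \<le> Re (cinner (x - y) (T *v (x - y)))" using assms[unfolded psd_def] unfolding cinner_def by blast
  have e1: "cinner (x + y) (T *v (x + y)) = cinner x (T *v x) + cinner x (T *v y) + cinner y (T *v x) + cinner y (T *v y)"
    by (simp add: matrix_vector_right_distrib cinner_add_left cinner_add_right)
  have e2: "cinner (x - y) (T *v (x - y)) = cinner x (T *v x) - cinner x (T *v y) - cinner y (T *v x) + cinner y (T *v y)"
    by (simp add: matrix_vector_right_distrib matrix_vector_mult_diff_distrib cinner_diff_left cinner_diff_right)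
  have e3: "Re (cinner y (T *v x)) = Re (cinner x (T *v y))" using hermitian_swap[OF h, of y x] by simp
  show ?thesis using p e1 e2 e3 by simp
qed

lemma psd_sum_mono:
  assumes fin: "finite I" and k: "k \<in> I" and psd: "\<And>i. i \<in> I \<Longrightarrow> psd (T i)"
  shows "spec_norm (T k) \<le> spec_norm (\<Sum>i\<in>I. T i)"
proof (rule spec_norm_le)
  let ?W = "\<Sum>i\<in>I. T i"
  show "0 \<le> spec_norm ?W" by (rule spec_norm_ge0)
  have quad: "Re (cinner z (T k *v z)) \<le> spec_norm ?W * (norm z)\<^sup>2" for z
  proof -
    have "Re (cinner z (T k *v z)) \<le> (\<Sum>i\<in>I. Re (cinner z (T i *v z)))"
      by (rule member_le_sum[OF k _ fin]) (use psd in \<open>auto simp: psd_def cinner_def\<close>)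
    also have "\<dots> = Re (cinner z (?W *v z))" by (simp add: mv_sum cinner_sum_right)
    also have "\<dots> \<le> norm (cinner z (?W *v z))" by (rule complex_Re_le_cmod)
    also have "\<dots> \<le> norm z * norm (?W *v z)" by (rule cinner_norm)
    also have "\<dots> \<le> norm z * (spec_norm ?W * norm z)" by (intro mult_left_mono spec_norm_mv) simp
    finally show ?thesis by (simp add: power2_eq_square mult_ac)
  qed
  fix y
  let ?u = "T k *v y"
  show "norm ?u \<le> spec_norm ?W * norm y"
  proof (cases "?u = 0")
    case True then show ?thesis using spec_norm_ge0[of ?W] by simp
  next
    case False
    then have nu: "0 < norm ?u" by simp
    then have "y \<noteq> 0" using mv_zero by (auto simp: matrix_vector_mult_0_right)
    then have ny: "0 < norm y" by simp
    define x where "x = (norm y / norm ?u) *\<^sub>R ?u"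
    have nx: "norm x = norm y" using nu by (simp add: x_def)
    have "Re (cinner x ?u) = norm y / norm ?u * (norm ?u)\<^sup>2"
      by (simp add: x_def cinner_scaleR_left cinner_self)
    also have "\<dots> = norm y * norm ?u" using nu by (simp add: power2_eq_square)
    finally have r: "Re (cinner x ?u) = norm y * norm ?u" .
    have "4 * (norm y * norm ?u) \<le> Re (cinner (x + y) (T k *v (x + y)))"
      using psd_polar[OF psd[OF k], of x y] r by simp
    also have "\<dots> \<le> spec_norm ?W * (norm (x + y))\<^sup>2" by (rule quad)
    also have "\<dots> \<le> spec_norm ?W * (2 * norm y)\<^sup>2"
    proof (intro mult_left_mono spec_norm_ge0 power_mono)
      show "norm (x + y) \<le> 2 * norm y" using norm_triangle_ineq[of x y] nx by simp
    qed simp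
    finally have "4 * (norm y * norm ?u) \<le> 4 * (norm y * (spec_norm ?W * norm y))"
      by (simp add: power2_eq_square mult_ac)
    then have "norm y * norm ?u \<le> norm y * (spec_norm ?W * norm y)" by simp
    then show ?thesis using ny by (simp add: mult_le_cancel_left_pos)
  qed
qed




lemma bl_mv_left: "bounded_linear (\<lambda>A::complex^'n^'m. A *v x)"
proof -
  have "linear (\<lambda>A::complex^'n^'m. A *v x)"
    by (rule linearI) (simp_all add: matrix_vector_mult_add_rdistrib mv_scaleR)
  then show ?thesis by (simp add: linear_conv_bounded_linear)
qed

lemma integrable_spec_norm:
  fixes F :: "'a \<Rightarrow> complex^'n^'m"
  assumes "integrable M F"
  shows "integrable M (\<lambda>w. spec_norm (F w))"
proof (rule Bochner_Integration.integrable_bound)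
  show "integrable M (\<lambda>w. real (CARD('m) * CARD('n)) * norm (F w))"
    using assms by (intro integrable_mult_right integrable_norm)
  show "(\<lambda>w. spec_norm (F w)) \<in> borel_measurable M"
    using assms by measurable
  show "AE w in M. norm (spec_norm (F w)) \<le> norm (real (CARD('m) * CARD('n)) * norm (F w))"
  proof (rule AE_I2)
    fix w
    show "norm (spec_norm (F w)) \<le> norm (real (CARD('m) * CARD('n)) * norm (F w))"
      using spec_norm_frob[of "F w"] spec_norm_ge0[of "F w"] by (simp add: abs_mult)
  qed
qed

lemma spec_norm_integral:
  fixes F :: "'a \<Rightarrow> complex^'n^'m"
  assumes F: "integrable M F"
  shows "spec_norm (integral\<^sup>L M F) \<le> (\<integral>w. spec_norm (F w) \<partial>M)"
proof (rule spec_norm_le)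
  show "0 \<le> (\<integral>w. spec_norm (F w) \<partial>M)" by (intro integral_nonneg_AE) (simp add: spec_norm_ge0)
  fix x
  have "integral\<^sup>L M F *v x = (\<integral>w. F w *v x \<partial>M)"
    by (rule integral_bounded_linear[OF bl_mv_left F, symmetric])
  then have "norm (integral\<^sup>L M F *v x) \<le> (\<integral>w. norm (F w *v x) \<partial>M)"
    by (simp add: integral_norm_bound)
  also have "\<dots> \<le> (\<integral>w. spec_norm (F w) * norm x \<partial>M)"
  proof (rule integral_mono)
    show "integrable M (\<lambda>w. norm (F w *v x))"
      using integrable_bounded_linear[OF bl_mv_left F] by (rule integrable_norm)
    show "integrable M (\<lambda>w. spec_norm (F w) * norm x)"
      using integrable_spec_norm[OF F] by (rule integrable_mult_left)
  qed (rule spec_norm_mv)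
  also have "\<dots> = (\<integral>w. spec_norm (F w) \<partial>M) * norm x" by simp
  finally show "norm (integral\<^sup>L M F *v x) \<le> (\<integral>w. spec_norm (F w) \<partial>M) * norm x" .
qed

lemma spec_norm_integral_enn:
  fixes F :: "'a \<Rightarrow> complex^'n^'m"
  shows "ennreal (spec_norm (integral\<^sup>L M F)) \<le> (\<integral>\<^sup>+w. ennreal (spec_norm (F w)) \<partial>M)"
proof (cases "integrable M F")
  case True
  have "(\<integral>\<^sup>+w. ennreal (spec_norm (F w)) \<partial>M) = ennreal (\<integral>w. spec_norm (F w) \<partial>M)"
    by (rule nn_integral_eq_integral[OF integrable_spec_norm[OF True]]) (simp add: spec_norm_ge0)
  then show ?thesis using spec_norm_integral[OF True] by (simp add: ennreal_leI)
next
  case False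
  then show ?thesis by (simp add: not_integrable_integral_eq)
qed

lemma (in prob_space) nn_integral_sq_le:
  fixes f :: "'a \<Rightarrow> real"
  assumes [measurable]: "f \<in> borel_measurable M" and nn: "\<And>x. 0 \<le> f x"
  shows "(\<integral>\<^sup>+x. ennreal (f x) \<partial>M)\<^sup>2 \<le> (\<integral>\<^sup>+x. ennreal ((f x)\<^sup>2) \<partial>M)"
proof (cases "(\<integral>\<^sup>+x. ennreal ((f x)\<^sup>2) \<partial>M) = \<top>")
  case True then show ?thesis by simp
next
  case False
  then obtain r where r: "(\<integral>\<^sup>+x. ennreal ((f x)\<^sup>2) \<partial>M) = ennreal r"
    by (cases "(\<integral>\<^sup>+x. ennreal ((f x)\<^sup>2) \<partial>M)") auto
  have i2: "integrable M (\<lambda>x. (f x)\<^sup>2)"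
    by (rule integrableI_nn_integral_finite[OF _ _ r]) auto
  have i1: "integrable M f" by (rule square_integrable_imp_integrable[OF _ i2]) simp
  have e1: "(\<integral>\<^sup>+x. ennreal (f x) \<partial>M) = ennreal (\<integral>x. f x \<partial>M)"
    by (rule nn_integral_eq_integral[OF i1]) (simp add: nn)
  have e2: "(\<integral>\<^sup>+x. ennreal ((f x)\<^sup>2) \<partial>M) = ennreal (\<integral>x. (f x)\<^sup>2 \<partial>M)"
    by (rule nn_integral_eq_integral[OF i2]) simp
  have "0 \<le> variance f" by (intro integral_nonneg_AE) simp
  then have "(\<integral>x. f x \<partial>M)\<^sup>2 \<le> (\<integral>x. (f x)\<^sup>2 \<partial>M)" using variance_eq[OF i1 i2] by simp
  moreover have "0 \<le> (\<integral>x. f x \<partial>M)" by (intro integral_nonneg_AE) (simp add: nn)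
  ultimately show ?thesis unfolding e1 e2 by (simp add: ennreal_power ennreal_leI)
qed




lemma sq_sum_le: "(a + b)\<^sup>2 \<le> 2 * a\<^sup>2 + 2 * (b::real)\<^sup>2"
  using sum_squares_ge_zero[of "a - b" 0] by (simp add: power2_eq_square algebra_simps)

lemma spec_norm_sq_add: "(spec_norm (A + B))\<^sup>2 \<le> 2 * (spec_norm A)\<^sup>2 + 2 * (spec_norm B)\<^sup>2"
proof -
  have "(spec_norm (A + B))\<^sup>2 \<le> (spec_norm A + spec_norm B)\<^sup>2"
    by (intro power_mono spec_norm_add spec_norm_ge0)
  also have "\<dots> \<le> 2 * (spec_norm A)\<^sup>2 + 2 * (spec_norm B)\<^sup>2" by (rule sq_sum_le)
  finally show ?thesis .
qed

lemma rademacher: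
  fixes D :: "nat \<Rightarrow> complex^'n^'m"
  assumes fin: "finite I" and k: "k \<in> I"
  shows "2 ^ card I * (spec_norm (D k))\<^sup>2
    \<le> (\<Sum>A\<in>Pow I. (spec_norm (\<Sum>i\<in>I. if i \<in> A then D i else - D i))\<^sup>2)"
proof -
  define u where "u A = (\<Sum>i\<in>I. if i \<in> A then D i else - D i)" for A
  define \<sigma> where "\<sigma> A = (I - {k} - A) \<union> (A \<inter> {k})" for A :: "nat set"
  have sP: "\<sigma> A \<in> Pow I" if "A \<in> Pow I" for A using that k by (auto simp: \<sigma>_def)
  have ss: "\<sigma> (\<sigma> A) = A" if "A \<in> Pow I" for A using that k by (auto simp: \<sigma>_def)
  have bij: "bij_betw \<sigma> (Pow I) (Pow I)"
    by (rule bij_betwI[where g=\<sigma>]) (use sP ss in auto)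
  have key: "u A + u (\<sigma> A) = 2 *\<^sub>R (if k \<in> A then D k else - D k)" if A: "A \<in> Pow I" for A
  proof -
    have "u A + u (\<sigma> A) = (\<Sum>i\<in>I. (if i \<in> A then D i else - D i) + (if i \<in> \<sigma> A then D i else - D i))"
      by (simp add: u_def sum.distrib)
    also have "\<dots> = (\<Sum>i\<in>I. if i = k then 2 *\<^sub>R (if k \<in> A then D k else - D k) else 0)"
    proof (rule sum.cong[OF refl])
      fix i assume i: "i \<in> I"
      show "(if i \<in> A then D i else - D i) + (if i \<in> \<sigma> A then D i else - D i)
            = (if i = k then 2 *\<^sub>R (if k \<in> A then D k else - D k) else 0)"
        using i A by (auto simp: \<sigma>_def scaleR_2)
    qed
    also have "\<dots> = 2 *\<^sub>R (if k \<in> A then D k else - D k)" using fin k by simp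
    finally show ?thesis .
  qed
  have each: "4 * (spec_norm (D k))\<^sup>2 \<le> 2 * (spec_norm (u A))\<^sup>2 + 2 * (spec_norm (u (\<sigma> A)))\<^sup>2"
    if A: "A \<in> Pow I" for A
  proof -
    have "spec_norm (u A + u (\<sigma> A)) = 2 * spec_norm (D k)"
      using key[OF A] by (simp add: spec_norm_scaleR spec_norm_uminus)
    then have "4 * (spec_norm (D k))\<^sup>2 = (spec_norm (u A + u (\<sigma> A)))\<^sup>2"
      by (simp add: power2_eq_square)
    also have "\<dots> \<le> 2 * (spec_norm (u A))\<^sup>2 + 2 * (spec_norm (u (\<sigma> A)))\<^sup>2"
      by (rule spec_norm_sq_add)
    finally show ?thesis .
  qed
  have "(\<Sum>A\<in>Pow I. 4 * (spec_norm (D k))\<^sup>2)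
     \<le> (\<Sum>A\<in>Pow I. 2 * (spec_norm (u A))\<^sup>2 + 2 * (spec_norm (u (\<sigma> A)))\<^sup>2)"
    by (rule sum_mono) (rule each)
  also have "\<dots> = 2 * (\<Sum>A\<in>Pow I. (spec_norm (u A))\<^sup>2) + 2 * (\<Sum>A\<in>Pow I. (spec_norm (u (\<sigma> A)))\<^sup>2)"
    by (simp add: sum.distrib sum_distrib_left)
  also have "(\<Sum>A\<in>Pow I. (spec_norm (u (\<sigma> A)))\<^sup>2) = (\<Sum>A\<in>Pow I. (spec_norm (u A))\<^sup>2)"
    using sum.reindex_bij_betw[OF bij, of "\<lambda>A. (spec_norm (u A))\<^sup>2"] by simp
  finally have "4 * (2 ^ card I * (spec_norm (D k))\<^sup>2) \<le> 4 * (\<Sum>A\<in>Pow I. (spec_norm (u A))\<^sup>2)"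
    using fin by (simp add: card_Pow mult_ac)
  then show ?thesis unfolding u_def by simp
qed




locale symm_setup =
  fixes \<nu> :: "nat \<Rightarrow> (complex^'n^'m) measure" and n :: nat
  assumes prob: "\<And>j. prob_space (\<nu> j)"
  and sets_nu: "\<And>j. sets (\<nu> j) = sets borel"
  and shift: "\<And>i. i \<in> {1..n} \<Longrightarrow> \<nu> (i+n) = \<nu> i"
  and intg: "\<And>i. i \<in> {1..n} \<Longrightarrow> integrable (\<nu> i) (\<lambda>z. z)"
  and mean: "\<And>i. i \<in> {1..n} \<Longrightarrow> (\<integral>z. z \<partial>\<nu> i) = 0"
begin

abbreviation "II \<equiv> {1..n}"
abbreviation "KK \<equiv> {n+1..2*n}"
abbreviation "JJ \<equiv> {1..2*n}"

lemma JJ_split: "JJ = II \<union> KK" by auto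
lemma II_KK: "II \<inter> KK = {}" by auto

sublocale PS: product_sigma_finite \<nu>
  unfolding product_sigma_finite_def by (simp add: prob prob_space_imp_sigma_finite)

lemma prob_Pi: "prob_space (PiM L \<nu>)"
  by (rule prob_space_PiM) (simp add: prob)

lemma emeasure_Pi: "emeasure (PiM L \<nu>) (space (PiM L \<nu>)) = 1"
  using prob_Pi prob_space.emeasure_space_1 by blast

lemma sets_Pi: "sets (PiM L \<nu>) = sets (PiM L (\<lambda>_. borel))"
  by (rule sets_PiM_cong) (simp_all add: sets_nu)

lemma meas_Pi: "f \<in> borel_measurable (PiM L (\<lambda>_. borel)) \<Longrightarrow> f \<in> borel_measurable (PiM L \<nu>)"
  using measurable_cong_sets[OF sets_Pi refl] by blast

lemma meas_nu: "f \<in> borel_measurable borel \<Longrightarrow> f \<in> borel_measurable (\<nu> j)"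
  using measurable_cong_sets[OF sets_nu refl] by blast

lemma fold_I:
  assumes f: "f \<in> borel_measurable (PiM II (\<lambda>_. borel))"
  shows "(\<integral>\<^sup>+x. f (restrict x II) \<partial>PiM JJ \<nu>) = (\<integral>\<^sup>+x. f x \<partial>PiM II \<nu>)"
proof -
  have fm: "f \<in> borel_measurable (PiM II \<nu>)" by (rule meas_Pi[OF f])
  have gm: "(\<lambda>x. f (restrict x II)) \<in> borel_measurable (PiM (II \<union> KK) \<nu>)"
    by (rule measurable_comp[OF measurable_restrict_subset fm, unfolded comp_def]) auto
  have "(\<integral>\<^sup>+x. f (restrict x II) \<partial>PiM JJ \<nu>)
      = (\<integral>\<^sup>+x. (\<integral>\<^sup>+y. f (restrict (merge II KK (x, y)) II) \<partial>PiM KK \<nu>) \<partial>PiM II \<nu>)"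
    unfolding JJ_split by (rule PS.product_nn_integral_fold[OF II_KK _ _ gm]) auto
  also have "\<dots> = (\<integral>\<^sup>+x. f x \<partial>PiM II \<nu>)"
  proof (rule nn_integral_cong)
    fix x assume x: "x \<in> space (PiM II \<nu>)"
    have "\<And>y. restrict (merge II KK (x, y)) II = x"
      using x by (auto simp: space_PiM PiE_def extensional_def merge_def fun_eq_iff)
    then show "(\<integral>\<^sup>+y. f (restrict (merge II KK (x, y)) II) \<partial>PiM KK \<nu>) = f x"
      by (simp add: emeasure_Pi)
  qed
  finally show ?thesis .
qed

lemma reindex_inv:
  assumes \<pi>1: "\<pi> \<in> JJ \<rightarrow> JJ" and \<pi>2: "inj_on \<pi> JJ" and \<pi>3: "\<And>j. j \<in> JJ \<Longrightarrow> \<nu> (\<pi> j) = \<nu> j"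
  and f: "f \<in> borel_measurable (PiM JJ (\<lambda>_. borel))"
  shows "(\<integral>\<^sup>+x. f (\<lambda>j\<in>JJ. x (\<pi> j)) \<partial>PiM JJ \<nu>) = (\<integral>\<^sup>+x. f x \<partial>PiM JJ \<nu>)"
proof -
  have "distr (PiM JJ \<nu>) (PiM JJ (\<lambda>j. \<nu> (\<pi> j))) (\<lambda>\<omega>. \<lambda>j\<in>JJ. \<omega> (\<pi> j)) = PiM JJ (\<lambda>j. \<nu> (\<pi> j))"
    by (rule distr_PiM_reindex) (use prob \<pi>1 \<pi>2 in auto)
  moreover have e: "PiM JJ (\<lambda>j. \<nu> (\<pi> j)) = PiM JJ \<nu>" by (rule PiM_cong) (simp_all add: \<pi>3)
  ultimately have d: "distr (PiM JJ \<nu>) (PiM JJ \<nu>) (\<lambda>\<omega>. \<lambda>j\<in>JJ. \<omega> (\<pi> j)) = PiM JJ \<nu>" by simp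
  have tm: "(\<lambda>\<omega>. \<lambda>j\<in>JJ. \<omega> (\<pi> j)) \<in> measurable (PiM JJ \<nu>) (PiM JJ \<nu>)"
  proof (rule measurable_restrict)
    fix j assume j: "j \<in> JJ"
    have "(\<lambda>\<omega>. \<omega> (\<pi> j)) \<in> measurable (PiM JJ \<nu>) (\<nu> (\<pi> j))"
      using \<pi>1 j by (intro measurable_component_singleton) auto
    then show "(\<lambda>\<omega>. \<omega> (\<pi> j)) \<in> measurable (PiM JJ \<nu>) (\<nu> j)" using \<pi>3[OF j] by simp
  qed
  have fm: "f \<in> borel_measurable (PiM JJ \<nu>)" by (rule meas_Pi[OF f])
  have "(\<integral>\<^sup>+x. f x \<partial>PiM JJ \<nu>) = (\<integral>\<^sup>+x. f x \<partial>distr (PiM JJ \<nu>) (PiM JJ \<nu>) (\<lambda>\<omega>. \<lambda>j\<in>JJ. \<omega> (\<pi> j)))"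
    using d by simp
  also have "\<dots> = (\<integral>\<^sup>+x. f (\<lambda>j\<in>JJ. x (\<pi> j)) \<partial>PiM JJ \<nu>)"
    by (rule nn_integral_distr[OF tm]) (simp only: measurable_distr_eq1 fm)
  finally show ?thesis by simp
qed

lemma comp_K:
  assumes i: "i \<in> II" and g: "g \<in> borel_measurable borel"
  shows "(\<integral>\<^sup>+y. g (y (i+n)) \<partial>PiM KK \<nu>) = (\<integral>\<^sup>+z. g z \<partial>\<nu> i)"
proof -
  have iK: "i + n \<in> KK" using i by auto
  have "(\<integral>\<^sup>+z. g z \<partial>\<nu> i) = (\<integral>\<^sup>+z. g z \<partial>\<nu> (i+n))" using shift[OF i] by simp
  also have "\<dots> = (\<integral>\<^sup>+z. g z \<partial>distr (PiM KK \<nu>) (\<nu> (i+n)) (\<lambda>\<omega>. \<omega> (i+n)))"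
    by (subst distr_PiM_component[OF _ iK]) (simp_all add: prob)
  also have "\<dots> = (\<integral>\<^sup>+y. g (y (i+n)) \<partial>PiM KK \<nu>)"
    by (rule nn_integral_distr[OF measurable_component_singleton[OF iK]]) (simp add: meas_nu g)
  finally show ?thesis by simp
qed

lemma stepA_point:
  assumes i: "i \<in> II"
  shows "ennreal ((spec_norm c)\<^sup>2) \<le> (\<integral>\<^sup>+z. ennreal ((spec_norm (c - z))\<^sup>2) \<partial>\<nu> i)"
proof -
  interpret N: prob_space "\<nu> i" by (rule prob)
  have "(\<integral>z. c - z \<partial>\<nu> i) = c"
    using intg[OF i] mean[OF i] by (simp add: integral_diff N.prob_space)
  then have "ennreal (spec_norm c) \<le> (\<integral>\<^sup>+z. ennreal (spec_norm (c - z)) \<partial>\<nu> i)"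
    using spec_norm_integral_enn[of "\<nu> i" "\<lambda>z. c - z"] by simp
  then have "(ennreal (spec_norm c))\<^sup>2 \<le> (\<integral>\<^sup>+z. ennreal (spec_norm (c - z)) \<partial>\<nu> i)\<^sup>2"
    by (rule power_mono) simp
  also have "\<dots> \<le> (\<integral>\<^sup>+z. ennreal ((spec_norm (c - z))\<^sup>2) \<partial>\<nu> i)"
    by (rule N.nn_integral_sq_le) (auto intro!: meas_nu simp: spec_norm_ge0)
  finally show ?thesis by (simp add: ennreal_power spec_norm_ge0)
qed


lemma m_H: "(\<lambda>x. SUP i\<in>II. ennreal ((spec_norm (x i - x (i+n)))\<^sup>2)) \<in> borel_measurable (PiM JJ (\<lambda>_. borel))"
  by measurable

lemma m_U: "(\<lambda>x. ennreal ((spec_norm (\<Sum>i\<in>II. if i \<in> A then x i - x (i+n) else - (x i - x (i+n))))\<^sup>2)) \<in> borel_measurable (PiM JJ (\<lambda>_. borel))"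
  by measurable

lemma m_G1: "(\<lambda>x. SUP i\<in>II. ennreal ((spec_norm (x i))\<^sup>2)) \<in> borel_measurable (PiM II (\<lambda>_. borel))"
  by measurable

lemma m_G2: "(\<lambda>x. ennreal ((spec_norm (\<Sum>i\<in>II. x i))\<^sup>2)) \<in> borel_measurable (PiM II (\<lambda>_. borel))"
  by measurable

lemma m_a: "(\<lambda>x. ennreal ((spec_norm (\<Sum>i\<in>II. x i))\<^sup>2)) \<in> borel_measurable (PiM JJ (\<lambda>_. borel))"
  by measurable

lemma m_b: "(\<lambda>x. ennreal ((spec_norm (\<Sum>i\<in>II. x (i+n)))\<^sup>2)) \<in> borel_measurable (PiM JJ (\<lambda>_. borel))"
  by measurable


lemma stepA:
  "(\<integral>\<^sup>+x. (SUP i\<in>II. ennreal ((spec_norm (x i))\<^sup>2)) \<partial>PiM II \<nu>)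
   \<le> (\<integral>\<^sup>+x. (SUP i\<in>II. ennreal ((spec_norm (x i - x (i+n)))\<^sup>2)) \<partial>PiM JJ \<nu>)"
proof -
  define H where "H x = (SUP i\<in>II. ennreal ((spec_norm (x i - x (i+n)))\<^sup>2))" for x :: "nat \<Rightarrow> complex^'n^'m"
  have Hm: "H \<in> borel_measurable (PiM (II \<union> KK) \<nu>)"
    unfolding H_def JJ_split[symmetric] by (rule meas_Pi[OF m_H])
  have "(\<integral>\<^sup>+x. H x \<partial>PiM JJ \<nu>) = (\<integral>\<^sup>+x. (\<integral>\<^sup>+y. H (merge II KK (x, y)) \<partial>PiM KK \<nu>) \<partial>PiM II \<nu>)"
    unfolding JJ_split by (rule PS.product_nn_integral_fold[OF II_KK _ _ Hm]) auto
  moreover have "(\<integral>\<^sup>+x. (SUP i\<in>II. ennreal ((spec_norm (x i))\<^sup>2)) \<partial>PiM II \<nu>)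
     \<le> (\<integral>\<^sup>+x. (\<integral>\<^sup>+y. H (merge II KK (x, y)) \<partial>PiM KK \<nu>) \<partial>PiM II \<nu>)"
  proof (rule nn_integral_mono)
    fix x
    show "(SUP i\<in>II. ennreal ((spec_norm (x i))\<^sup>2)) \<le> (\<integral>\<^sup>+y. H (merge II KK (x, y)) \<partial>PiM KK \<nu>)"
    proof (rule SUP_least)
      fix i assume i: "i \<in> II"
      have "ennreal ((spec_norm (x i))\<^sup>2) \<le> (\<integral>\<^sup>+z. ennreal ((spec_norm (x i - z))\<^sup>2) \<partial>\<nu> i)"
        by (rule stepA_point[OF i])
      also have "\<dots> = (\<integral>\<^sup>+y. ennreal ((spec_norm (x i - y (i+n)))\<^sup>2) \<partial>PiM KK \<nu>)"
        by (rule comp_K[OF i, symmetric]) measurable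
      also have "\<dots> \<le> (\<integral>\<^sup>+y. H (merge II KK (x, y)) \<partial>PiM KK \<nu>)"
      proof (rule nn_integral_mono)
        fix y
        have "merge II KK (x, y) i = x i" "merge II KK (x, y) (i+n) = y (i+n)"
          using i by (auto simp: merge_def)
        then show "ennreal ((spec_norm (x i - y (i+n)))\<^sup>2) \<le> H (merge II KK (x, y))"
          unfolding H_def using i by (auto intro!: SUP_upper2[of i])
      qed
      finally show "ennreal ((spec_norm (x i))\<^sup>2) \<le> (\<integral>\<^sup>+y. H (merge II KK (x, y)) \<partial>PiM KK \<nu>)" .
    qed
  qed
  ultimately show ?thesis unfolding H_def by simp
qed

definition perm :: "nat set \<Rightarrow> nat \<Rightarrow> nat" where
  "perm A j = (if j \<in> A then j + n else if n < j \<and> j - n \<in> A then j - n else j)"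

lemma perm_props:
  assumes A: "A \<subseteq> II"
  shows "perm A \<in> JJ \<rightarrow> JJ" "inj_on (perm A) JJ" "\<And>j. j \<in> JJ \<Longrightarrow> \<nu> (perm A j) = \<nu> j"
    and "\<And>i. i \<in> II \<Longrightarrow> perm A i = (if i \<in> A then i + n else i)"
    and "\<And>i. i \<in> II \<Longrightarrow> perm A (i + n) = (if i \<in> A then i else i + n)"
proof -
  have inv: "perm A (perm A j) = j" if "j \<in> JJ" for j
    using A that by (auto simp: perm_def subset_iff)
  show "perm A \<in> JJ \<rightarrow> JJ" using A by (auto simp: perm_def subset_iff)
  show "inj_on (perm A) JJ" by (metis inj_onI inv)
  show "\<nu> (perm A j) = \<nu> j" if "j \<in> JJ" for j
  proof -
    consider "j \<in> A" | "j \<notin> A" "n < j" "j - n \<in> A" | "perm A j = j"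
      by (cases "j \<in> A"; cases "n < j \<and> j - n \<in> A") (auto simp: perm_def)
    then show ?thesis
    proof cases
      case 1 then show ?thesis using A shift[of j] by (auto simp: perm_def)
    next
      case 2 then show ?thesis using A shift[of "j - n"] by (auto simp: perm_def)
    qed simp
  qed
  show "\<And>i. i \<in> II \<Longrightarrow> perm A i = (if i \<in> A then i + n else i)" using A by (auto simp: perm_def)
  show "\<And>i. i \<in> II \<Longrightarrow> perm A (i + n) = (if i \<in> A then i else i + n)" using A by (auto simp: perm_def subset_iff)
qed

lemma stepC:
  assumes A: "A \<subseteq> II"
  shows "(\<integral>\<^sup>+x. ennreal ((spec_norm (\<Sum>i\<in>II. if i \<in> A then x i - x (i+n) else - (x i - x (i+n))))\<^sup>2) \<partial>PiM JJ \<nu>)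
       = (\<integral>\<^sup>+x. ennreal ((spec_norm (\<Sum>i\<in>II. x i - x (i+n)))\<^sup>2) \<partial>PiM JJ \<nu>)"
proof -
  have m: "(\<lambda>x. ennreal ((spec_norm (\<Sum>i\<in>II. x i - x (i+n)))\<^sup>2)) \<in> borel_measurable (PiM JJ (\<lambda>_. borel))"
    by measurable
  have eq: "ennreal ((spec_norm (\<Sum>i\<in>II. (\<lambda>j\<in>JJ. x (perm A j)) i - (\<lambda>j\<in>JJ. x (perm A j)) (i+n)))\<^sup>2)
      = ennreal ((spec_norm (\<Sum>i\<in>II. if i \<in> A then x i - x (i+n) else - (x i - x (i+n))))\<^sup>2)" for x
  proof -
    have "(\<Sum>i\<in>II. (\<lambda>j\<in>JJ. x (perm A j)) i - (\<lambda>j\<in>JJ. x (perm A j)) (i+n))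
        = (\<Sum>i\<in>II. - (if i \<in> A then x i - x (i+n) else - (x i - x (i+n))))"
      by (rule sum.cong[OF refl]) (auto simp: perm_props(4,5)[OF A])
    also have "\<dots> = - (\<Sum>i\<in>II. (if i \<in> A then x i - x (i+n) else - (x i - x (i+n))))"
      by (rule sum_negf)
    finally show ?thesis by (simp add: spec_norm_uminus)
  qed
  have "(\<integral>\<^sup>+x. ennreal ((spec_norm (\<Sum>i\<in>II. if i \<in> A then x i - x (i+n) else - (x i - x (i+n))))\<^sup>2) \<partial>PiM JJ \<nu>)
     = (\<integral>\<^sup>+x. ennreal ((spec_norm (\<Sum>i\<in>II. (\<lambda>j\<in>JJ. x (perm A j)) i - (\<lambda>j\<in>JJ. x (perm A j)) (i+n)))\<^sup>2) \<partial>PiM JJ \<nu>)"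
    by (rule nn_integral_cong) (simp only: eq)
  also have "\<dots> = (\<integral>\<^sup>+x. ennreal ((spec_norm (\<Sum>i\<in>II. x i - x (i+n)))\<^sup>2) \<partial>PiM JJ \<nu>)"
    by (rule reindex_inv[OF perm_props(1,2,3)[OF A] m])
  finally show ?thesis .
qed

lemma enn_aux: "0 \<le> p \<Longrightarrow> 0 \<le> q \<Longrightarrow> r \<le> 2*p + 2*q \<Longrightarrow> ennreal r \<le> 2 * ennreal p + 2 * ennreal (q::real)"
proof -
  assume p: "0 \<le> p" and q: "0 \<le> q" and r: "r \<le> 2*p + 2*q"
  have "ennreal (2*p + 2*q) = ennreal (2*p) + ennreal (2*q)" using p q by (simp add: ennreal_plus)
  also have "\<dots> = 2 * ennreal p + 2 * ennreal q" using p q by (simp add: ennreal_mult)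
  finally show ?thesis using r by (metis ennreal_leI)
qed

lemma stepD:
  "(\<integral>\<^sup>+x. ennreal ((spec_norm (\<Sum>i\<in>II. x i - x (i+n)))\<^sup>2) \<partial>PiM JJ \<nu>)
   \<le> 4 * (\<integral>\<^sup>+x. ennreal ((spec_norm (\<Sum>i\<in>II. x i))\<^sup>2) \<partial>PiM II \<nu>)"
proof -
  let ?a = "\<lambda>x. ennreal ((spec_norm (\<Sum>i\<in>II. x i))\<^sup>2)"
  let ?b = "\<lambda>x. ennreal ((spec_norm (\<Sum>i\<in>II. x (i+n)))\<^sup>2)"
  have ma: "?a \<in> borel_measurable (PiM JJ \<nu>)" by (rule meas_Pi[OF m_a])
  have mb: "?b \<in> borel_measurable (PiM JJ \<nu>)" by (rule meas_Pi[OF m_b])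
  have "(\<integral>\<^sup>+x. ennreal ((spec_norm (\<Sum>i\<in>II. x i - x (i+n)))\<^sup>2) \<partial>PiM JJ \<nu>)
      \<le> (\<integral>\<^sup>+x. 2 * ?a x + 2 * ?b x \<partial>PiM JJ \<nu>)"
  proof (rule nn_integral_mono)
    fix x :: "nat \<Rightarrow> complex^'n^'m"
    have "(\<Sum>i\<in>II. x i - x (i+n)) = (\<Sum>i\<in>II. x i) + - (\<Sum>i\<in>II. x (i+n))"
      by (simp add: sum_subtractf)
    then have "(spec_norm (\<Sum>i\<in>II. x i - x (i+n)))\<^sup>2
        \<le> 2 * (spec_norm (\<Sum>i\<in>II. x i))\<^sup>2 + 2 * (spec_norm (\<Sum>i\<in>II. x (i+n)))\<^sup>2"
      using spec_norm_sq_add[of "\<Sum>i\<in>II. x i" "- (\<Sum>i\<in>II. x (i+n))"] by (simp add: spec_norm_uminus)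
    then show "ennreal ((spec_norm (\<Sum>i\<in>II. x i - x (i+n)))\<^sup>2) \<le> 2 * ?a x + 2 * ?b x"
      by (intro enn_aux) (simp_all add: spec_norm_ge0)
  qed
  also have "\<dots> = 2 * (\<integral>\<^sup>+x. ?a x \<partial>PiM JJ \<nu>) + 2 * (\<integral>\<^sup>+x. ?b x \<partial>PiM JJ \<nu>)"
    using ma mb by (simp add: nn_integral_add nn_integral_cmult)
  also have "(\<integral>\<^sup>+x. ?b x \<partial>PiM JJ \<nu>) = (\<integral>\<^sup>+x. ?a x \<partial>PiM JJ \<nu>)"
  proof -
    have e: "?a (\<lambda>j\<in>JJ. x (perm II j)) = ?b x" for x
    proof -
      have "(\<Sum>i\<in>II. (\<lambda>j\<in>JJ. x (perm II j)) i) = (\<Sum>i\<in>II. x (i+n))"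
        by (rule sum.cong[OF refl]) (simp add: perm_def)
      then show ?thesis by simp
    qed
    have "(\<integral>\<^sup>+x. ?b x \<partial>PiM JJ \<nu>) = (\<integral>\<^sup>+x. ?a (\<lambda>j\<in>JJ. x (perm II j)) \<partial>PiM JJ \<nu>)"
      by (rule nn_integral_cong) (simp only: e)
    also have "\<dots> = (\<integral>\<^sup>+x. ?a x \<partial>PiM JJ \<nu>)"
      by (rule reindex_inv[OF perm_props(1,2,3)[OF order_refl] m_a])
    finally show ?thesis .
  qed
  also have "(\<integral>\<^sup>+x. ?a x \<partial>PiM JJ \<nu>) = (\<integral>\<^sup>+x. ennreal ((spec_norm (\<Sum>i\<in>II. x i))\<^sup>2) \<partial>PiM II \<nu>)"
    using fold_I[OF m_G2] by simp
  finally have fin: "(\<integral>\<^sup>+x. ennreal ((spec_norm (\<Sum>i\<in>II. x i - x (i+n)))\<^sup>2) \<partial>PiM JJ \<nu>)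
    \<le> 2 * (\<integral>\<^sup>+x. ennreal ((spec_norm (\<Sum>i\<in>II. x i))\<^sup>2) \<partial>PiM II \<nu>) + 2 * (\<integral>\<^sup>+x. ennreal ((spec_norm (\<Sum>i\<in>II. x i))\<^sup>2) \<partial>PiM II \<nu>)" .
  have "2 * X + 2 * X = (2 + 2) * (X::ennreal)" for X by (rule distrib_right[symmetric])
  then show ?thesis using fin by simp
qed


lemma symm_main:
  "(\<integral>\<^sup>+x. (SUP i\<in>II. ennreal ((spec_norm (x i))\<^sup>2)) \<partial>PiM II \<nu>)
   \<le> 4 * (\<integral>\<^sup>+x. ennreal ((spec_norm (\<Sum>i\<in>II. x i))\<^sup>2) \<partial>PiM II \<nu>)"
proof -
  define c :: ennreal where "c = 2 ^ n"
  have c_eq: "c = ennreal (2 ^ n)" unfolding c_def by (simp add: ennreal_power[symmetric])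
  define H where "H x = (SUP i\<in>II. ennreal ((spec_norm (x i - x (i+n)))\<^sup>2))" for x :: "nat \<Rightarrow> complex^'n^'m"
  define U where "U A x = ennreal ((spec_norm (\<Sum>i\<in>II. if i \<in> A then x i - x (i+n) else - (x i - x (i+n))))\<^sup>2)"
    for A and x :: "nat \<Rightarrow> complex^'n^'m"
  define f0 where "f0 x = ennreal ((spec_norm (\<Sum>i\<in>II. x i - x (i+n)))\<^sup>2)" for x :: "nat \<Rightarrow> complex^'n^'m"
  have Hm: "H \<in> borel_measurable (PiM JJ \<nu>)" unfolding H_def by (rule meas_Pi[OF m_H])
  have Um: "U A \<in> borel_measurable (PiM JJ \<nu>)" for A unfolding U_def by (rule meas_Pi[OF m_U])
  have B: "c * H x \<le> (\<Sum>A\<in>Pow II. U A x)" for x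
  proof -
    have "c * H x = (SUP k\<in>II. c * ennreal ((spec_norm (x k - x (k+n)))\<^sup>2))"
      unfolding H_def by (rule SUP_mult_left_ennreal)
    also have "\<dots> \<le> (\<Sum>A\<in>Pow II. U A x)"
    proof (rule SUP_least)
      fix k assume k: "k \<in> II"
      have "c * ennreal ((spec_norm (x k - x (k+n)))\<^sup>2) = ennreal (2 ^ n * (spec_norm (x k - x (k+n)))\<^sup>2)"
        unfolding c_eq by (simp add: ennreal_mult)
      also have "\<dots> \<le> ennreal (\<Sum>A\<in>Pow II. (spec_norm (\<Sum>i\<in>II. if i \<in> A then x i - x (i+n) else - (x i - x (i+n))))\<^sup>2)"
        using rademacher[of II k "\<lambda>i. x i - x (i+n)"] k by (intro ennreal_leI) simp
      also have "\<dots> = (\<Sum>A\<in>Pow II. U A x)" unfolding U_def by simp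
      finally show "c * ennreal ((spec_norm (x k - x (k+n)))\<^sup>2) \<le> (\<Sum>A\<in>Pow II. U A x)" .
    qed
    finally show ?thesis .
  qed
  have "c * (\<integral>\<^sup>+x. (SUP i\<in>II. ennreal ((spec_norm (x i))\<^sup>2)) \<partial>PiM II \<nu>) \<le> c * (\<integral>\<^sup>+x. H x \<partial>PiM JJ \<nu>)"
    unfolding H_def by (intro mult_left_mono stepA) simp
  also have "\<dots> = (\<integral>\<^sup>+x. c * H x \<partial>PiM JJ \<nu>)" by (rule nn_integral_cmult[OF Hm, symmetric])
  also have "\<dots> \<le> (\<integral>\<^sup>+x. (\<Sum>A\<in>Pow II. U A x) \<partial>PiM JJ \<nu>)" by (rule nn_integral_mono) (rule B)
  also have "\<dots> = (\<Sum>A\<in>Pow II. (\<integral>\<^sup>+x. U A x \<partial>PiM JJ \<nu>))" by (rule nn_integral_sum) (rule Um)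
  also have "\<dots> = (\<Sum>A\<in>Pow II. (\<integral>\<^sup>+x. f0 x \<partial>PiM JJ \<nu>))"
    by (rule sum.cong[OF refl]) (unfold U_def f0_def, rule stepC, simp)
  also have "\<dots> = c * (\<integral>\<^sup>+x. f0 x \<partial>PiM JJ \<nu>)"
    by (simp add: card_Pow c_def)
  also have "\<dots> \<le> c * (4 * (\<integral>\<^sup>+x. ennreal ((spec_norm (\<Sum>i\<in>II. x i))\<^sup>2) \<partial>PiM II \<nu>))"
    unfolding f0_def by (intro mult_left_mono stepD) simp
  finally show ?thesis
    using ennreal_mult_le_mult_iff[of c] by (simp add: c_def power_eq_top_ennreal)
qed

end



lemma symm_M:
  fixes S :: "nat \<Rightarrow> 'a \<Rightarrow> complex^'n^'m" and M :: "'a measure"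
  assumes P: "prob_space M" and ind: "prob_space.indep_vars M (\<lambda>_. borel) S {1..n}"
    and hyp: "\<And>i. i \<in> {1..n} \<Longrightarrow> integrable M (S i) \<and> (\<integral>w. S i w \<partial>M) = 0"
  shows "(\<integral>\<^sup>+w. (SUP i\<in>{1..n}. ennreal ((spec_norm (S i w))\<^sup>2)) \<partial>M)
    \<le> 4 * (\<integral>\<^sup>+w. ennreal ((spec_norm (\<Sum>i=1..n. S i w))\<^sup>2) \<partial>M)"
proof (cases "n = 0")
  case True then show ?thesis by (simp add: bot_ennreal)
next
  case False
  interpret M: prob_space M by (rule P)
  have Sm: "S i \<in> borel_measurable M" if "i \<in> {1..n}" for i
    using hyp[OF that] by (simp add: borel_measurable_integrable)
  define S' where "S' i = (if i \<in> {1..n} then S i else (\<lambda>_. 0))" for i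
  have S'm: "S' i \<in> borel_measurable M" for i using Sm by (simp add: S'_def)
  define \<nu> where "\<nu> j = distr M borel (S' (if j \<le> n then j else j - n))" for j
  have \<nu>I: "\<nu> i = distr M borel (S i)" if "i \<in> {1..n}" for i
    using that by (simp add: \<nu>_def S'_def)
  interpret SS: symm_setup \<nu> n
  proof (rule symm_setup.intro)
    show "prob_space (\<nu> j)" for j unfolding \<nu>_def by (rule M.prob_space_distr[OF S'm])
    show "sets (\<nu> j) = sets borel" for j unfolding \<nu>_def by simp
    show "\<nu> (i + n) = \<nu> i" if "i \<in> {1..n}" for i using that by (simp add: \<nu>_def)
    show "integrable (\<nu> i) (\<lambda>z. z)" if i: "i \<in> {1..n}" for i
      unfolding \<nu>I[OF i] using hyp[OF i] Sm[OF i] by (subst integrable_distr_eq) simp_all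
    show "(\<integral>z. z \<partial>\<nu> i) = 0" if i: "i \<in> {1..n}" for i
      unfolding \<nu>I[OF i] using hyp[OF i] Sm[OF i] by (subst integral_distr) simp_all
  qed
  have I: "{1..n} \<noteq> {}" using False by simp
  have "distr M (PiM {1..n} (\<lambda>_. borel)) (\<lambda>w. \<lambda>i\<in>{1..n}. S i w) = PiM {1..n} (\<lambda>i. distr M borel (S i))"
    using M.indep_vars_iff_distr_eq_PiM'[OF I, where M'="\<lambda>_. borel" and X=S] Sm ind by simp
  also have "\<dots> = PiM {1..n} \<nu>" by (rule PiM_cong) (simp_all add: \<nu>I)
  finally have D: "distr M (PiM {1..n} (\<lambda>_. borel)) (\<lambda>w. \<lambda>i\<in>{1..n}. S i w) = PiM {1..n} \<nu>" .
  have Tm: "(\<lambda>w. \<lambda>i\<in>{1..n}. S i w) \<in> measurable M (PiM {1..n} (\<lambda>_. borel))"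
    by (rule measurable_restrict) (rule Sm)
  have tr: "(\<integral>\<^sup>+w. g (\<lambda>i\<in>{1..n}. S i w) \<partial>M) = (\<integral>\<^sup>+x. g x \<partial>PiM {1..n} \<nu>)"
    if g: "g \<in> borel_measurable (PiM {1..n} (\<lambda>_. borel))" for g
  proof -
    have "(\<integral>\<^sup>+x. g x \<partial>PiM {1..n} \<nu>) = (\<integral>\<^sup>+x. g x \<partial>distr M (PiM {1..n} (\<lambda>_. borel)) (\<lambda>w. \<lambda>i\<in>{1..n}. S i w))"
      by (simp only: D)
    also have "\<dots> = (\<integral>\<^sup>+w. g (\<lambda>i\<in>{1..n}. S i w) \<partial>M)"
      by (rule nn_integral_distr[OF Tm]) (simp only: measurable_distr_eq1 g)
    finally show ?thesis by simp
  qed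
  have e1: "(\<integral>\<^sup>+w. (SUP i\<in>{1..n}. ennreal ((spec_norm (S i w))\<^sup>2)) \<partial>M)
      = (\<integral>\<^sup>+x. (SUP i\<in>{1..n}. ennreal ((spec_norm (x i))\<^sup>2)) \<partial>PiM {1..n} \<nu>)"
  proof -
    have "(\<integral>\<^sup>+w. (SUP i\<in>{1..n}. ennreal ((spec_norm (S i w))\<^sup>2)) \<partial>M)
        = (\<integral>\<^sup>+w. (SUP i\<in>{1..n}. ennreal ((spec_norm ((\<lambda>i\<in>{1..n}. S i w) i))\<^sup>2)) \<partial>M)"
      by (intro nn_integral_cong SUP_cong refl) simp
    also have "\<dots> = (\<integral>\<^sup>+x. (SUP i\<in>{1..n}. ennreal ((spec_norm (x i))\<^sup>2)) \<partial>PiM {1..n} \<nu>)" by (rule tr[OF SS.m_G1])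
    finally show ?thesis .
  qed
  have e2: "(\<integral>\<^sup>+w. ennreal ((spec_norm (\<Sum>i=1..n. S i w))\<^sup>2) \<partial>M)
      = (\<integral>\<^sup>+x. ennreal ((spec_norm (\<Sum>i=1..n. x i))\<^sup>2) \<partial>PiM {1..n} \<nu>)"
  proof -
    have "(\<integral>\<^sup>+w. ennreal ((spec_norm (\<Sum>i=1..n. S i w))\<^sup>2) \<partial>M)
        = (\<integral>\<^sup>+w. ennreal ((spec_norm (\<Sum>i=1..n. (\<lambda>i\<in>{1..n}. S i w) i))\<^sup>2) \<partial>M)"
    proof (rule nn_integral_cong)
      fix w
      have "(\<Sum>i=1..n. (\<lambda>i\<in>{1..n}. S i w) i) = (\<Sum>i=1..n. S i w)" by (rule sum.cong) simp_all
      then show "ennreal ((spec_norm (\<Sum>i=1..n. S i w))\<^sup>2) = ennreal ((spec_norm (\<Sum>i=1..n. (\<lambda>i\<in>{1..n}. S i w) i))\<^sup>2)"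
        by simp
    qed
    also have "\<dots> = (\<integral>\<^sup>+x. ennreal ((spec_norm (\<Sum>i=1..n. x i))\<^sup>2) \<partial>PiM {1..n} \<nu>)" by (rule tr[OF SS.m_G2])
    finally show ?thesis .
  qed
  show ?thesis unfolding e1 e2 by (rule SS.symm_main)
qed




lemma esqrt_mono: "a \<le> b \<Longrightarrow> esqrt a \<le> esqrt b"
proof (cases "b = \<top>")
  case True then show ?thesis by (simp add: esqrt_def)
next
  case False
  assume ab: "a \<le> b"
  then have "a \<noteq> \<top>" using False top_unique by auto
  moreover have "enn2real a \<le> enn2real b" using ab False by (simp add: enn2real_mono top.not_eq_extremum)
  ultimately show ?thesis using False by (simp add: esqrt_def ennreal_leI)
qed

lemma esqrt_sq: "(esqrt a)\<^sup>2 = a"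
proof (cases "a = \<top>")
  case True then show ?thesis by (simp add: esqrt_def)
next
  case False
  then have "(esqrt a)\<^sup>2 = ennreal ((sqrt (enn2real a))\<^sup>2)" by (simp add: esqrt_def ennreal_power)
  also have "\<dots> = ennreal (enn2real a)" by simp
  also have "\<dots> = a" using False by (simp add: less_top)
  finally show ?thesis .
qed

lemma esqrt_4: "esqrt (4 * a) = 2 * esqrt a"
proof (cases "a = \<top>")
  case True then show ?thesis by (simp add: esqrt_def ennreal_mult_top)
next
  case False
  then have "4 * a \<noteq> \<top>" by (simp add: ennreal_mult_eq_top_iff)
  moreover have "enn2real (4 * a) = 4 * enn2real a" by (simp add: enn2real_mult)
  moreover have "sqrt (4 * enn2real a) = 2 * sqrt (enn2real a)"
    by (simp add: real_sqrt_mult)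
  ultimately show ?thesis using False by (simp add: esqrt_def ennreal_mult)
qed

lemma h2: "(1::ennreal)/2 = ennreal (1/2)"
  by (metis divide_ennreal ennreal_1 ennreal_numeral zero_le_one zero_less_numeral)
lemma h4: "(1::ennreal)/4 = ennreal (1/4)"
  by (metis divide_ennreal ennreal_1 ennreal_numeral zero_le_one zero_less_numeral)
lemma hh: "1/2 * e + 1/2 * (e::ennreal) = e"
proof -
  have "1/2 * e + 1/2 * e = (ennreal (1/2) + ennreal (1/2)) * e" by (simp add: h2 distrib_right)
  also have "ennreal (1/2) + ennreal (1/2) = ennreal (1/2 + 1/2)" by (rule ennreal_plus[symmetric]) simp_all
  also have "(1/2 + 1/2::real) = 1" by simp
  finally show ?thesis by simp
qed
lemma h44: "1/4 * (4 * L) = (L::ennreal)"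
proof -
  have "1/4 * (4 * L) = (ennreal (1/4) * ennreal 4) * L" by (simp add: h4 mult.assoc)
  also have "ennreal (1/4) * ennreal 4 = ennreal (1/4 * 4)" by (rule ennreal_mult[symmetric]) simp_all
  also have "(1/4 * 4::real) = 1" by simp
  finally show ?thesis by simp
qed
lemma h42: "1/4 * (2 * L) = 1/2 * (L::ennreal)"
proof -
  have "1/4 * (2 * L) = (ennreal (1/4) * ennreal 2) * L" by (simp add: h4 mult.assoc)
  also have "ennreal (1/4) * ennreal 2 = ennreal (1/4 * 2)" by (rule ennreal_mult[symmetric]) simp_all
  also have "(1/4 * 2::real) = 1/2" by simp
  finally show ?thesis by (simp add: h2)
qed

lemma alg1:
  assumes "a \<le> L" "b \<le> L"
  shows "1/4 * (esqrt a + esqrt b)\<^sup>2 \<le> (L::ennreal)"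
proof -
  have "esqrt a + esqrt b \<le> 2 * esqrt L"
    using add_mono[OF esqrt_mono[OF assms(1)] esqrt_mono[OF assms(2)]] by (simp add: mult_2)
  then have "(esqrt a + esqrt b)\<^sup>2 \<le> (2 * esqrt L)\<^sup>2" by (rule power_mono) simp
  also have "\<dots> = 4 * L" by (simp add: power_mult_distrib esqrt_sq)
  finally have "1/4 * (esqrt a + esqrt b)\<^sup>2 \<le> 1/4 * (4 * L)" by (rule mult_left_mono) simp
  also have "\<dots> = L" by (rule h44)
  finally show ?thesis .
qed

lemma alg3:
  assumes "c \<le> esqrt L" "b \<le> 4 * L"
  shows "1/2 * c + 1/4 * esqrt b \<le> esqrt (L::ennreal)"
proof -
  have "esqrt b \<le> 2 * esqrt L" using esqrt_mono[OF assms(2)] by (simp add: esqrt_4)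
  then have "1/4 * esqrt b \<le> 1/4 * (2 * esqrt L)" by (rule mult_left_mono) simp
  also have "\<dots> = 1/2 * esqrt L" by (rule h42)
  finally have "1/2 * c + 1/4 * esqrt b \<le> 1/2 * esqrt L + 1/2 * esqrt L"
    using assms(1) by (intro add_mono mult_left_mono) simp_all
  then show ?thesis by (simp add: hh)
qed


lemma ctrans_add: "ctrans (A + B) = ctrans A + ctrans B"
  unfolding ctrans_def by (simp add: vec_eq_iff)
lemma ctrans_zero: "ctrans 0 = 0"
  unfolding ctrans_def by (simp add: vec_eq_iff)
lemma ctrans_sum: "ctrans (\<Sum>i\<in>I. A i) = (\<Sum>i\<in>I. ctrans (A i))"
  by (induction I rule: infinite_finite_induct) (simp_all add: ctrans_add ctrans_zero)

lemma a1_bound: "ennreal (spec_norm (\<integral>w. Z w ** ctrans (Z w) \<partial>M)) \<le> (\<integral>\<^sup>+w. ennreal ((spec_norm (Z w))\<^sup>2) \<partial>M)"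
proof -
  have "ennreal (spec_norm (\<integral>w. Z w ** ctrans (Z w) \<partial>M)) \<le> (\<integral>\<^sup>+w. ennreal (spec_norm (Z w ** ctrans (Z w))) \<partial>M)"
    by (rule spec_norm_integral_enn)
  also have "\<dots> \<le> (\<integral>\<^sup>+w. ennreal ((spec_norm (Z w))\<^sup>2) \<partial>M)"
  proof (rule nn_integral_mono)
    fix w
    have "spec_norm (Z w ** ctrans (Z w)) \<le> spec_norm (Z w) * spec_norm (ctrans (Z w))" by (rule spec_norm_mult)
    also have "\<dots> \<le> spec_norm (Z w) * spec_norm (Z w)"
      by (intro mult_left_mono spec_norm_ctrans spec_norm_ge0)
    finally show "ennreal (spec_norm (Z w ** ctrans (Z w))) \<le> ennreal ((spec_norm (Z w))\<^sup>2)"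
      by (intro ennreal_leI) (simp add: power2_eq_square)
  qed
  finally show ?thesis .
qed

lemma a2_bound: "ennreal (spec_norm (\<integral>w. ctrans (Z w) ** Z w \<partial>M)) \<le> (\<integral>\<^sup>+w. ennreal ((spec_norm (Z w))\<^sup>2) \<partial>M)"
proof -
  have "ennreal (spec_norm (\<integral>w. ctrans (Z w) ** Z w \<partial>M)) \<le> (\<integral>\<^sup>+w. ennreal (spec_norm (ctrans (Z w) ** Z w)) \<partial>M)"
    by (rule spec_norm_integral_enn)
  also have "\<dots> \<le> (\<integral>\<^sup>+w. ennreal ((spec_norm (Z w))\<^sup>2) \<partial>M)"
  proof (rule nn_integral_mono)
    fix w
    have "spec_norm (ctrans (Z w) ** Z w) \<le> spec_norm (ctrans (Z w)) * spec_norm (Z w)" by (rule spec_norm_mult)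
    also have "\<dots> \<le> spec_norm (Z w) * spec_norm (Z w)"
      by (intro mult_right_mono spec_norm_ctrans spec_norm_ge0)
    finally show "ennreal (spec_norm (ctrans (Z w) ** Z w)) \<le> ennreal ((spec_norm (Z w))\<^sup>2)"
      by (intro ennreal_leI) (simp add: power2_eq_square)
  qed
  finally show ?thesis .
qed

lemma part1:
  fixes T :: "nat \<Rightarrow> 'a \<Rightarrow> complex^'d^'d" and M :: "'a measure"
  assumes "\<forall>i\<in>{1..n}. integrable M (T i) \<and> (\<forall>w\<in>space M. psd (T i w))"
  shows "(\<integral>\<^sup>+w. ennreal (spec_norm (\<Sum>i=1..n. T i w)) \<partial>M)
    \<ge> 1/4 * (esqrt (ennreal (spec_norm (\<integral>w. (\<Sum>i=1..n. T i w) \<partial>M)))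
             + esqrt (\<integral>\<^sup>+w. (SUP i\<in>{1..n}. ennreal (spec_norm (T i w))) \<partial>M))\<^sup>2"
proof (rule alg1)
  show "ennreal (spec_norm (\<integral>w. (\<Sum>i=1..n. T i w) \<partial>M)) \<le> (\<integral>\<^sup>+w. ennreal (spec_norm (\<Sum>i=1..n. T i w)) \<partial>M)"
    by (rule spec_norm_integral_enn)
  show "(\<integral>\<^sup>+w. (SUP i\<in>{1..n}. ennreal (spec_norm (T i w))) \<partial>M) \<le> (\<integral>\<^sup>+w. ennreal (spec_norm (\<Sum>i=1..n. T i w)) \<partial>M)"
  proof (rule nn_integral_mono)
    fix w assume w: "w \<in> space M"
    show "(SUP i\<in>{1..n}. ennreal (spec_norm (T i w))) \<le> ennreal (spec_norm (\<Sum>i=1..n. T i w))"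
    proof (rule SUP_least)
      fix k assume k: "k \<in> {1..n}"
      show "ennreal (spec_norm (T k w)) \<le> ennreal (spec_norm (\<Sum>i=1..n. T i w))"
        using assms w by (intro ennreal_leI psd_sum_mono[OF _ k]) auto
    qed
  qed
qed

lemma part3:
  fixes S :: "nat \<Rightarrow> 'a \<Rightarrow> complex^'d2^'d1" and M :: "'a measure"
  assumes P: "prob_space M" and ind: "prob_space.indep_vars M (\<lambda>_. borel) S {1..n}"
    and hyp: "\<forall>i\<in>{1..n}. integrable M (S i) \<and> (\<integral>w. S i w \<partial>M) = 0"
  shows "esqrt (\<integral>\<^sup>+w. ennreal ((spec_norm (\<Sum>i=1..n. S i w))\<^sup>2) \<partial>M)
            \<ge> 1/2 * max (esqrt (ennreal (spec_norm (\<integral>w. (\<Sum>i=1..n. S i w) ** ctrans (\<Sum>i=1..n. S i w) \<partial>M))))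
                         (esqrt (ennreal (spec_norm (\<integral>w. ctrans (\<Sum>i=1..n. S i w) ** (\<Sum>i=1..n. S i w) \<partial>M))))
              + 1/4 * esqrt (\<integral>\<^sup>+w. (SUP i\<in>{1..n}. ennreal ((spec_norm (S i w))\<^sup>2)) \<partial>M)"
proof (rule alg3)
  show "max (esqrt (ennreal (spec_norm (\<integral>w. (\<Sum>i=1..n. S i w) ** ctrans (\<Sum>i=1..n. S i w) \<partial>M))))
            (esqrt (ennreal (spec_norm (\<integral>w. ctrans (\<Sum>i=1..n. S i w) ** (\<Sum>i=1..n. S i w) \<partial>M))))
      \<le> esqrt (\<integral>\<^sup>+w. ennreal ((spec_norm (\<Sum>i=1..n. S i w))\<^sup>2) \<partial>M)"
    using esqrt_mono[OF a1_bound[where Z="\<lambda>w. \<Sum>i=1..n. S i w" and M=M]]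
          esqrt_mono[OF a2_bound[where Z="\<lambda>w. \<Sum>i=1..n. S i w" and M=M]] by simp
  show "(\<integral>\<^sup>+w. (SUP i\<in>{1..n}. ennreal ((spec_norm (S i w))\<^sup>2)) \<partial>M)
      \<le> 4 * (\<integral>\<^sup>+w. ennreal ((spec_norm (\<Sum>i=1..n. S i w))\<^sup>2) \<partial>M)"
    by (rule symm_M[OF P ind]) (use hyp in auto)
qed

lemma part2:
  fixes Y :: "nat \<Rightarrow> 'a \<Rightarrow> complex^'d^'d" and M :: "'a measure"
  assumes P: "prob_space M" and ind: "prob_space.indep_vars M (\<lambda>_. borel) Y {1..n}"
    and hyp: "\<forall>i\<in>{1..n}. integrable M (Y i) \<and> (\<integral>w. Y i w \<partial>M) = 0 \<and> (\<forall>w\<in>space M. hermitian (Y i w))"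
  shows "esqrt (\<integral>\<^sup>+w. ennreal ((spec_norm (\<Sum>i=1..n. Y i w))\<^sup>2) \<partial>M)
            \<ge> 1/2 * esqrt (ennreal (spec_norm (\<integral>w. (\<Sum>i=1..n. Y i w) ** (\<Sum>i=1..n. Y i w) \<partial>M)))
              + 1/4 * esqrt (\<integral>\<^sup>+w. (SUP i\<in>{1..n}. ennreal ((spec_norm (Y i w))\<^sup>2)) \<partial>M)"
proof (rule alg3)
  have "(\<integral>w. (\<Sum>i=1..n. Y i w) ** (\<Sum>i=1..n. Y i w) \<partial>M) = (\<integral>w. (\<Sum>i=1..n. Y i w) ** ctrans (\<Sum>i=1..n. Y i w) \<partial>M)"
  proof (rule Bochner_Integration.integral_cong[OF refl])
    fix w assume w: "w \<in> space M"
    have "ctrans (\<Sum>i=1..n. Y i w) = (\<Sum>i=1..n. Y i w)"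
      unfolding ctrans_sum by (rule sum.cong) (use hyp w in \<open>auto simp: hermitian_def\<close>)
    then show "(\<Sum>i=1..n. Y i w) ** (\<Sum>i=1..n. Y i w) = (\<Sum>i=1..n. Y i w) ** ctrans (\<Sum>i=1..n. Y i w)" by simp
  qed
  then show "esqrt (ennreal (spec_norm (\<integral>w. (\<Sum>i=1..n. Y i w) ** (\<Sum>i=1..n. Y i w) \<partial>M)))
      \<le> esqrt (\<integral>\<^sup>+w. ennreal ((spec_norm (\<Sum>i=1..n. Y i w))\<^sup>2) \<partial>M)"
    using esqrt_mono[OF a1_bound[where Z="\<lambda>w. \<Sum>i=1..n. Y i w" and M=M]] by simp
  show "(\<integral>\<^sup>+w. (SUP i\<in>{1..n}. ennreal ((spec_norm (Y i w))\<^sup>2)) \<partial>M)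
      \<le> 4 * (\<integral>\<^sup>+w. ennreal ((spec_norm (\<Sum>i=1..n. Y i w))\<^sup>2) \<partial>M)"
    by (rule symm_M[OF P ind]) (use hyp in auto)
qed


theorem theorem6p1:
  fixes M :: "'a measure"
  assumes "prob_space M"
  shows
  "(\<forall>(n::nat) (T :: nat \<Rightarrow> 'a \<Rightarrow> complex^'d^'d).
      prob_space.indep_vars M (\<lambda>_. borel) T {1..n}
      \<and> (\<forall>i\<in>{1..n}. integrable M (T i) \<and> (\<forall>\<omega>\<in>space M. psd (T i \<omega>)))
      \<longrightarrow> (let W = (\<lambda>\<omega>. \<Sum>i=1..n. T i \<omega>) in
            (\<integral>\<^sup>+\<omega>. ennreal (spec_norm (W \<omega>)) \<partial>M)
            \<ge> 1/4 * (esqrt (ennreal (spec_norm (\<integral>\<omega>. W \<omega> \<partial>M)))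
                     + esqrt (\<integral>\<^sup>+\<omega>. (SUP i\<in>{1..n}. ennreal (spec_norm (T i \<omega>))) \<partial>M))\<^sup>2))
   \<and>
   (\<forall>(n::nat) (Y :: nat \<Rightarrow> 'a \<Rightarrow> complex^'d^'d).
      prob_space.indep_vars M (\<lambda>_. borel) Y {1..n}
      \<and> (\<forall>i\<in>{1..n}. integrable M (Y i) \<and> (\<integral>\<omega>. Y i \<omega> \<partial>M) = 0
                     \<and> (\<forall>\<omega>\<in>space M. hermitian (Y i \<omega>)))
      \<longrightarrow> (let X = (\<lambda>\<omega>. \<Sum>i=1..n. Y i \<omega>) in
            esqrt (\<integral>\<^sup>+\<omega>. ennreal ((spec_norm (X \<omega>))\<^sup>2) \<partial>M)
            \<ge> 1/2 * esqrt (ennreal (spec_norm (\<integral>\<omega>. X \<omega> ** X \<omega> \<partial>M)))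
              + 1/4 * esqrt (\<integral>\<^sup>+\<omega>. (SUP i\<in>{1..n}. ennreal ((spec_norm (Y i \<omega>))\<^sup>2)) \<partial>M)))
   \<and>
   (\<forall>(n::nat) (S :: nat \<Rightarrow> 'a \<Rightarrow> complex^'d2^'d1).
      prob_space.indep_vars M (\<lambda>_. borel) S {1..n}
      \<and> (\<forall>i\<in>{1..n}. integrable M (S i) \<and> (\<integral>\<omega>. S i \<omega> \<partial>M) = 0)
      \<longrightarrow> (let Z = (\<lambda>\<omega>. \<Sum>i=1..n. S i \<omega>) in
            esqrt (\<integral>\<^sup>+\<omega>. ennreal ((spec_norm (Z \<omega>))\<^sup>2) \<partial>M)
            \<ge> 1/2 * max (esqrt (ennreal (spec_norm (\<integral>\<omega>. Z \<omega> ** ctrans (Z \<omega>) \<partial>M))))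
                         (esqrt (ennreal (spec_norm (\<integral>\<omega>. ctrans (Z \<omega>) ** Z \<omega> \<partial>M))))
              + 1/4 * esqrt (\<integral>\<^sup>+\<omega>. (SUP i\<in>{1..n}. ennreal ((spec_norm (S i \<omega>))\<^sup>2)) \<partial>M)))"
  proof (intro conjI allI impI)
  fix n :: nat and T :: "nat \<Rightarrow> 'a \<Rightarrow> complex^'d^'d"
  assume h: "prob_space.indep_vars M (\<lambda>_. borel) T {1..n}
      \<and> (\<forall>i\<in>{1..n}. integrable M (T i) \<and> (\<forall>\<omega>\<in>space M. psd (T i \<omega>)))"
  then show "let W = (\<lambda>\<omega>. \<Sum>i=1..n. T i \<omega>) in
            (\<integral>\<^sup>+\<omega>. ennreal (spec_norm (W \<omega>)) \<partial>M)
            \<ge> 1/4 * (esqrt (ennreal (spec_norm (\<integral>\<omega>. W \<omega> \<partial>M)))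
                     + esqrt (\<integral>\<^sup>+\<omega>. (SUP i\<in>{1..n}. ennreal (spec_norm (T i \<omega>))) \<partial>M))\<^sup>2"
    unfolding Let_def by (intro part1) simp
next
  fix n :: nat and Y :: "nat \<Rightarrow> 'a \<Rightarrow> complex^'d^'d"
  assume h: "prob_space.indep_vars M (\<lambda>_. borel) Y {1..n}
      \<and> (\<forall>i\<in>{1..n}. integrable M (Y i) \<and> (\<integral>\<omega>. Y i \<omega> \<partial>M) = 0
                     \<and> (\<forall>\<omega>\<in>space M. hermitian (Y i \<omega>)))"
  then show "let X = (\<lambda>\<omega>. \<Sum>i=1..n. Y i \<omega>) in
            esqrt (\<integral>\<^sup>+\<omega>. ennreal ((spec_norm (X \<omega>))\<^sup>2) \<partial>M)
            \<ge> 1/2 * esqrt (ennreal (spec_norm (\<integral>\<omega>. X \<omega> ** X \<omega> \<partial>M)))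
              + 1/4 * esqrt (\<integral>\<^sup>+\<omega>. (SUP i\<in>{1..n}. ennreal ((spec_norm (Y i \<omega>))\<^sup>2)) \<partial>M)"
    unfolding Let_def using assms by (intro part2) auto
next
  fix n :: nat and S :: "nat \<Rightarrow> 'a \<Rightarrow> complex^'d2^'d1"
  assume h: "prob_space.indep_vars M (\<lambda>_. borel) S {1..n}
      \<and> (\<forall>i\<in>{1..n}. integrable M (S i) \<and> (\<integral>\<omega>. S i \<omega> \<partial>M) = 0)"
  then show "let Z = (\<lambda>\<omega>. \<Sum>i=1..n. S i \<omega>) in
            esqrt (\<integral>\<^sup>+\<omega>. ennreal ((spec_norm (Z \<omega>))\<^sup>2) \<partial>M)
            \<ge> 1/2 * max (esqrt (ennreal (spec_norm (\<integral>\<omega>. Z \<omega> ** ctrans (Z \<omega>) \<partial>M))))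
                         (esqrt (ennreal (spec_norm (\<integral>\<omega>. ctrans (Z \<omega>) ** Z \<omega> \<partial>M))))
              + 1/4 * esqrt (\<integral>\<^sup>+\<omega>. (SUP i\<in>{1..n}. ennreal ((spec_norm (S i \<omega>))\<^sup>2)) \<partial>M)"
    unfolding Let_def using assms by (intro part3) auto
qed

end
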